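(* Let $G>I$ be a finite group with $Z(G)=I$ and let $\sigma_1,\sigma_2\in G$ with $G=\langle\sigma_1,\sigma_2\rangle$, $\sigma_1\sigma_2\sigma_1=\sigma_2\sigma_1\sigma_2$ and $o(\sigma_1\sigma_2\sigma_1)=2$. Let $C=[\sigma_1]$ and $D=[\sigma_1\sigma_2\sigma_1]$ (conjugacy classes). Put $h_1=[\sigma_1,\sigma_2,\sigma_1,\sigma_1\sigma_2\sigma_1]$, $h_2=[\sigma_2\sigma_1\sigma_2^{-1},\sigma_2,\sigma_1,\sigma_2\sigma_1^2]$, $h_3=[\sigma_2,\sigma_1,\sigma_1,\sigma_2\sigma_1^2]$, $h_4=[\sigma_2,\sigma_2,\sigma_1,\sigma_2^2\sigma_1]$. Then $Z_4=\{h_1\}^{B_4}=\{h_1,h_2,h_3,h_4\}\subseteq\Sigma^i(C,C,C,D)$ is an orbit of length $4$ under $B_4$, with (identifying $h_i$ with $i$) $\rho_4(\beta_{12})=(1,2,3)(4)$, $\rho_4(\beta_{13})=(1,3,4)(2)$, $\rho_4(\beta_{14})=(1,4,2)(3)$, $\rho_4(B_4)\cong A_4$, and genus $g_{Z_4}=0$.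
   Context: $\iota$ is the identity and $I$ the trivial group. $\Sigma^i(C_1,\dots,C_4)$ is the set of $G$-conjugacy classes $[\sigma_1,\dots,\sigma_4]$ (simultaneous conjugation) of tuples with $\sigma_j\in C_j$, $\langle\sigma_1,\dots,\sigma_4\rangle=G$, $\sigma_1\sigma_2\sigma_3\sigma_4=\iota$. Braids act from the right: $[\underline{\sigma}]^{\beta_2}=[\sigma_1\sigma_2\sigma_1^{-1},\sigma_1,\sigma_3,\sigma_4]$, $[\underline{\sigma}]^{\beta_3}=[\sigma_1,\sigma_2\sigma_3\sigma_2^{-1},\sigma_2,\sigma_4]$, $[\underline{\sigma}]^{\beta_4}=[\sigma_1,\sigma_2,\sigma_3\sigma_4\sigma_3^{-1},\sigma_3]$. The pure braid group $B_4$ is generated by $\beta_{12}=\beta_2^2$, $\beta_{13}=\beta_2^{-1}\beta_3^2\beta_2$, $\beta_{14}=\beta_2^{-1}\beta_3^{-1}\beta_4^2\beta_3\beta_2$, $\beta_{23}=\beta_3^2$, $\beta_{24}=\beta_3^{-1}\beta_4^2\beta_3$, $\beta_{34}=\beta_4^2$; $\rho_4$ is the induced permutation representation. For a $B_4$-orbit $Z$, $g_Z=1-|Z|+\frac12(3|Z|-z_{12}-z_{13}-z_{14})$ with $z_{1j}$ the number of cycles (fixed points included) of $\rho_4(\beta_{1j})$ on $Z$. *)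

theory Defs
  imports "HOL-Algebra.Algebra" "HOL-Algebra.Sym_Groups"
begin

definition grp_center :: "('a, 'b) monoid_scheme \<Rightarrow> 'a set" where
  "grp_center G = {z \<in> carrier G. \<forall>g \<in> carrier G. z \<otimes>\<^bsub>G\<^esub> g = g \<otimes>\<^bsub>G\<^esub> z}"

definition gconj :: "('a, 'b) monoid_scheme \<Rightarrow> 'a \<Rightarrow> 'a \<Rightarrow> 'a" where
  "gconj G g x = g \<otimes>\<^bsub>G\<^esub> x \<otimes>\<^bsub>G\<^esub> inv\<^bsub>G\<^esub> g"

definition conj_class :: "('a, 'b) monoid_scheme \<Rightarrow> 'a \<Rightarrow> 'a set" where
  "conj_class G x = {gconj G g x | g. g \<in> carrier G}"

type_synonym 'a tup4 = "'a \<times> 'a \<times> 'a \<times> 'a"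

fun tconj :: "('a, 'b) monoid_scheme \<Rightarrow> 'a \<Rightarrow> 'a tup4 \<Rightarrow> 'a tup4" where
  "tconj G g (a, b, c, d) = (gconj G g a, gconj G g b, gconj G g c, gconj G g d)"

definition tclass :: "('a, 'b) monoid_scheme \<Rightarrow> 'a tup4 \<Rightarrow> 'a tup4 set" where
  "tclass G t = {tconj G g t | g. g \<in> carrier G}"

definition Sigma_i :: "('a, 'b) monoid_scheme \<Rightarrow> 'a set \<Rightarrow> 'a set \<Rightarrow> 'a set \<Rightarrow> 'a set
    \<Rightarrow> 'a tup4 set set" where
  "Sigma_i G C1 C2 C3 C4 =
     {tclass G (a, b, c, d) | a b c d.
        a \<in> C1 \<and> b \<in> C2 \<and> c \<in> C3 \<and> d \<in> C4 \<and>
        generate G {a, b, c, d} = carrier G \<and>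
        a \<otimes>\<^bsub>G\<^esub> b \<otimes>\<^bsub>G\<^esub> c \<otimes>\<^bsub>G\<^esub> d = \<one>\<^bsub>G\<^esub>}"

(* Artin generators beta_k (k = 2,3,4; flag True) and their inverses (flag False),
   acting from the right on tuples *)
fun tbraid :: "('a, 'b) monoid_scheme \<Rightarrow> nat \<times> bool \<Rightarrow> 'a tup4 \<Rightarrow> 'a tup4" where
  "tbraid G (k, s) (a, b, c, d) =
    (if k = 2 then (if s then (gconj G a b, a, c, d) else (b, gconj G (m_inv G b) a, c, d))
     else if k = 3 then (if s then (a, gconj G b c, b, d) else (a, c, gconj G (m_inv G c) b, d))
     else if k = 4 then (if s then (a, b, gconj G c d, c) else (a, b, d, gconj G (m_inv G d) c))
     else (a, b, c, d))"

definition cbraid :: "('a, 'b) monoid_scheme \<Rightarrow> nat \<times> bool \<Rightarrow> 'a tup4 set \<Rightarrow> 'a tup4 set" where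
  "cbraid G s Y = image (tbraid G s) Y"

(* right action of a braid word (leftmost letter acts first) *)
definition act_word :: "('a, 'b) monoid_scheme \<Rightarrow> (nat \<times> bool) list \<Rightarrow> 'a tup4 set \<Rightarrow> 'a tup4 set" where
  "act_word G w Y = fold (cbraid G) w Y"

definition inv_word :: "(nat \<times> bool) list \<Rightarrow> (nat \<times> bool) list" where
  "inv_word w = rev (map (\<lambda>(k, s). (k, \<not> s)) w)"

definition beta12 :: "(nat \<times> bool) list" where "beta12 = [(2, True), (2, True)]"
definition beta13 :: "(nat \<times> bool) list" where
  "beta13 = [(2, False), (3, True), (3, True), (2, True)]"
definition beta14 :: "(nat \<times> bool) list" where
  "beta14 = [(2, False), (3, False), (4, True), (4, True), (3, True), (2, True)]"
definition beta23 :: "(nat \<times> bool) list" where "beta23 = [(3, True), (3, True)]"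
definition beta24 :: "(nat \<times> bool) list" where
  "beta24 = [(3, False), (4, True), (4, True), (3, True)]"
definition beta34 :: "(nat \<times> bool) list" where "beta34 = [(4, True), (4, True)]"

definition pure_gens :: "(nat \<times> bool) list set" where
  "pure_gens = {beta12, beta13, beta14, beta23, beta24, beta34}"

(* words representing the elements of the pure braid group B_4 *)
definition pure_words :: "(nat \<times> bool) list set" where
  "pure_words = {concat ws | ws. set ws \<subseteq> pure_gens \<union> inv_word ` pure_gens}"

definition orbitB :: "('a, 'b) monoid_scheme \<Rightarrow> 'a tup4 set \<Rightarrow> 'a tup4 set set" where
  "orbitB G Y = {act_word G w Y | w. w \<in> pure_words}"

definition rho :: "('a, 'b) monoid_scheme \<Rightarrow> 'a tup4 set set \<Rightarrow> (nat \<times> bool) list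
    \<Rightarrow> ('a tup4 set \<Rightarrow> 'a tup4 set)" where
  "rho G Z w = restrict (act_word G w) Z"

(* the permutation group rho_4(B_4) on Z (right action: z^(fg) = (z^f)^g) *)
definition rho_group :: "('a, 'b) monoid_scheme \<Rightarrow> 'a tup4 set set
    \<Rightarrow> ('a tup4 set \<Rightarrow> 'a tup4 set) monoid" where
  "rho_group G Z = \<lparr> carrier = rho G Z ` pure_words,
                     monoid.mult = (\<lambda>f g. restrict (g \<circ> f) Z),
                     monoid.one = restrict id Z \<rparr>"

definition ncycles :: "('c \<Rightarrow> 'c) \<Rightarrow> 'c set \<Rightarrow> nat" where
  "ncycles f Z = card {{(f ^^ n) z | n. True} | z. z \<in> Z}"

definition genus :: "('a, 'b) monoid_scheme \<Rightarrow> 'a tup4 set set \<Rightarrow> real" where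
  "genus G Z = 1 - real (card Z) +
     (3 * real (card Z) - real (ncycles (act_word G beta12) Z)
       - real (ncycles (act_word G beta13) Z) - real (ncycles (act_word G beta14) Z)) / 2"

end

theory Submission
  imports Defs
begin

fun tc :: "('a, 'b) monoid_scheme \<Rightarrow> 'a tup4 \<Rightarrow> bool" where
  "tc G (a, b, c, d) = (a \<in> carrier G \<and> b \<in> carrier G \<and> c \<in> carrier G \<and> d \<in> carrier G)"

context group
begin

lemma invc1: "a \<in> carrier G \<Longrightarrow> x \<in> carrier G \<Longrightarrow> inv a \<otimes> (a \<otimes> x) = x"
  by (simp add: m_assoc[symmetric])
lemma invc2: "a \<in> carrier G \<Longrightarrow> x \<in> carrier G \<Longrightarrow> a \<otimes> (inv a \<otimes> x) = x"
  by (simp add: m_assoc[symmetric])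

lemma gconj_closed[simp]: "g \<in> carrier G \<Longrightarrow> x \<in> carrier G \<Longrightarrow> gconj G g x \<in> carrier G"
  by (simp add: gconj_def)

lemma gconj_mult: "g \<in> carrier G \<Longrightarrow> x \<in> carrier G \<Longrightarrow> y \<in> carrier G \<Longrightarrow>
   gconj G g (x \<otimes> y) = gconj G g x \<otimes> gconj G g y"
  by (simp add: gconj_def m_assoc invc1 invc2)

lemma gconj_inv: "g \<in> carrier G \<Longrightarrow> x \<in> carrier G \<Longrightarrow>
   inv (gconj G g x) = gconj G g (inv x)"
  by (simp add: gconj_def m_assoc inv_mult_group invc1 invc2)

lemma gconj_gconj: "g \<in> carrier G \<Longrightarrow> h \<in> carrier G \<Longrightarrow> x \<in> carrier G \<Longrightarrow>
   gconj G h (gconj G g x) = gconj G (h \<otimes> g) x"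
  by (simp add: gconj_def m_assoc inv_mult_group invc1 invc2)

lemma gconj_swap: "g \<in> carrier G \<Longrightarrow> a \<in> carrier G \<Longrightarrow> x \<in> carrier G \<Longrightarrow>
   gconj G (gconj G g a) (gconj G g x) = gconj G g (gconj G a x)"
  by (simp add: gconj_def m_assoc inv_mult_group invc1 invc2)

lemma gconj_one[simp]: "x \<in> carrier G \<Longrightarrow> gconj G \<one> x = x"
  by (simp add: gconj_def)

lemma tc_tbraid: "tc G t \<Longrightarrow> tc G (tbraid G s t)"
  by (cases t; cases s) auto

lemma tc_tconj: "tc G t \<Longrightarrow> g \<in> carrier G \<Longrightarrow> tc G (tconj G g t)"
  by (cases t) auto

lemma tc_fold: "tc G t \<Longrightarrow> tc G (fold (tbraid G) w t)"
  by (induction w arbitrary: t) (auto simp: tc_tbraid)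

lemma tbraid_tconj: "tc G t \<Longrightarrow> g \<in> carrier G \<Longrightarrow>
   tbraid G s (tconj G g t) = tconj G g (tbraid G s t)"
  by (cases t; cases s) (auto simp: gconj_swap gconj_inv)

lemma tconj_tconj: "tc G t \<Longrightarrow> g \<in> carrier G \<Longrightarrow> h \<in> carrier G \<Longrightarrow>
   tconj G h (tconj G g t) = tconj G (h \<otimes> g) t"
  by (cases t) (auto simp: gconj_gconj)

lemma tconj_one: "tc G t \<Longrightarrow> tconj G \<one> t = t"
  by (cases t) auto

lemma cbraid_tclass: "tc G t \<Longrightarrow> cbraid G s (tclass G t) = tclass G (tbraid G s t)"
proof -
  assume t: "tc G t"
  have "cbraid G s (tclass G t) = (\<lambda>g. tbraid G s (tconj G g t)) ` carrier G"
    unfolding cbraid_def tclass_def by auto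
  also have "\<dots> = (\<lambda>g. tconj G g (tbraid G s t)) ` carrier G"
    using tbraid_tconj[OF t] by (intro image_cong) auto
  also have "\<dots> = tclass G (tbraid G s t)" unfolding tclass_def by auto
  finally show ?thesis .
qed

lemma act_word_tclass: "tc G t \<Longrightarrow> act_word G w (tclass G t) = tclass G (fold (tbraid G) w t)"
proof (induction w arbitrary: t)
  case Nil thus ?case by (simp add: act_word_def)
next
  case (Cons a w)
  have "act_word G (a # w) (tclass G t) = act_word G w (cbraid G a (tclass G t))"
    by (simp add: act_word_def)
  also have "\<dots> = act_word G w (tclass G (tbraid G a t))" using Cons.prems cbraid_tclass by simp
  also have "\<dots> = tclass G (fold (tbraid G) w (tbraid G a t))"
    using Cons tc_tbraid by blast
  finally show ?case by simp
qed

lemma tclass_sub: "tc G t \<Longrightarrow> g \<in> carrier G \<Longrightarrow> tclass G (tconj G g t) \<subseteq> tclass G t"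
proof
  fix x assume *: "tc G t" "g \<in> carrier G" "x \<in> tclass G (tconj G g t)"
  then obtain h where h: "h \<in> carrier G" "x = tconj G h (tconj G g t)" unfolding tclass_def by blast
  hence "x = tconj G (h \<otimes> g) t" using * by (simp add: tconj_tconj)
  thus "x \<in> tclass G t" unfolding tclass_def using h * by blast
qed

lemma tclass_eqI: "tc G t \<Longrightarrow> g \<in> carrier G \<Longrightarrow> t' = tconj G g t \<Longrightarrow> tclass G t' = tclass G t"
proof -
  assume *: "tc G t" "g \<in> carrier G" "t' = tconj G g t"
  have "t = tconj G (inv g) t'" using * by (simp add: tconj_tconj tconj_one)
  thus ?thesis using * tclass_sub tc_tconj by (metis inv_closed subset_antisym)
qed

lemma tclass_eqD: "tc G t \<Longrightarrow> tc G t' \<Longrightarrow> tclass G t = tclass G t' \<Longrightarrow> \<exists>g\<in>carrier G. t' = tconj G g t"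
proof -
  assume a: "tc G t" "tc G t'" "tclass G t = tclass G t'"
  have "tconj G \<one> t' \<in> tclass G t'" unfolding tclass_def by blast
  hence "t' \<in> tclass G t" using a tconj_one by simp
  thus ?thesis unfolding tclass_def by blast
qed

lemma tbraid_inv: "tc G t \<Longrightarrow> tbraid G (k, \<not> s) (tbraid G (k, s) t) = t"
  by (cases t; cases s) (auto simp: gconj_def m_assoc inv_mult_group invc1 invc2)

lemma fold_inv_word: "tc G t \<Longrightarrow> fold (tbraid G) (inv_word w) (fold (tbraid G) w t) = t"
proof (induction w arbitrary: t)
  case Nil thus ?case by (simp add: inv_word_def)
next
  case (Cons a w)
  obtain k s where a: "a = (k, s)" by (cases a)
  have "inv_word (a # w) = inv_word w @ [(k, \<not> s)]" by (simp add: inv_word_def a)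
  hence "fold (tbraid G) (inv_word (a # w)) (fold (tbraid G) (a # w) t)
     = tbraid G (k, \<not> s) (fold (tbraid G) (inv_word w) (fold (tbraid G) w (tbraid G a t)))"
    by simp
  also have "\<dots> = t" using Cons tc_tbraid a tbraid_inv by simp
  finally show ?case .
qed

lemma act_word_inv: "tc G t \<Longrightarrow> act_word G (inv_word w) (act_word G w (tclass G t)) = tclass G t"
  by (simp add: act_word_tclass tc_fold fold_inv_word)

end



lemma orb3: "f a = b \<Longrightarrow> f b = c \<Longrightarrow> f c = a \<Longrightarrow> {(f ^^ n) a | n. True} = {a, b, c}"
proof -
  assume h: "f a = b" "f b = c" "f c = a"
  have "(f ^^ n) a \<in> {a, b, c}" for n by (induction n) (use h in auto)
  moreover have "a = (f ^^ 0) a" "b = (f ^^ 1) a" "c = (f ^^ 2) a"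
    using h by (simp_all add: numeral_2_eq_2)
  ultimately show ?thesis by blast
qed

lemma orb1: "f d = d \<Longrightarrow> {(f ^^ n) d | n. True} = {d}"
proof -
  assume h: "f d = d"
  have "(f ^^ n) d = d" for n by (induction n) (use h in auto)
  thus ?thesis by auto
qed

lemma ncyc: "a \<noteq> d \<Longrightarrow> f a = b \<Longrightarrow> f b = c \<Longrightarrow> f c = a \<Longrightarrow> f d = d \<Longrightarrow> ncycles f {a, b, c, d} = 2"
proof -
  assume h: "a \<noteq> d" "f a = b" "f b = c" "f c = a" "f d = d"
  let ?O = "\<lambda>x. {(f ^^ n) x | n. True}"
  have "{?O x | x. x \<in> {a, b, c, d}} = ?O ` {a, b, c, d}" by blast
  also have "\<dots> = {?O a, ?O b, ?O c, ?O d}" by simp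
  also have "\<dots> = {{a, b, c}, {b, c, a}, {c, a, b}, {d}}"
    by (simp only: orb3[of f a b c, OF h(2-4)] orb3[of f b c a, OF h(3,4,2)] orb3[of f c a b, OF h(4,2,3)] orb1[of f d, OF h(5)])
  also have "\<dots> = {{a, b, c}, {d}}" by (simp add: insert_commute)
  finally have e: "{?O x | x. x \<in> {a, b, c, d}} = {{a, b, c}, {d}}" .
  have "{a, b, c} \<noteq> {d}" using h by auto
  thus ?thesis unfolding ncycles_def e by simp
qed

locale thm6 = group G for G (structure) +
  fixes y z :: 'a
  assumes fin: "finite (carrier G)" and nontriv: "carrier G \<noteq> {\<one>}"
    and cent: "grp_center G = {\<one>}"
    and yc[simp]: "y \<in> carrier G" and zc[simp]: "z \<in> carrier G"
    and gen: "generate G {y \<otimes> z, z \<otimes> y} = carrier G"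
    and z2: "z \<otimes> z = \<one>"
    and y3: "y \<otimes> (y \<otimes> y) = \<one>"
begin

abbreviation "s1 \<equiv> y \<otimes> z"
abbreviation "s2 \<equiv> z \<otimes> y"

lemma z2': "x \<in> carrier G \<Longrightarrow> z \<otimes> (z \<otimes> x) = x"
  by (simp add: m_assoc[symmetric] z2)

lemma y3': "x \<in> carrier G \<Longrightarrow> y \<otimes> (y \<otimes> (y \<otimes> x)) = x"
  by (simp add: m_assoc[symmetric] y3)
  
lemma invz: "inv z = z"
  using z2 by (simp add: inv_equality)
lemma invy: "inv y = y \<otimes> y"
  using y3 by (metis inv_equality m_assoc yc m_closed)

lemmas nf = m_assoc z2 z2' y3 y3' invz invy inv_mult_group gconj_def

definition "h1 = tclass G (s1, s2, s1, s1 \<otimes> s2 \<otimes> s1)"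
definition "h2 = tclass G (s2 \<otimes> s1 \<otimes> inv s2, s2, s1, s2 \<otimes> s1 \<otimes> s1)"
definition "h3 = tclass G (s2, s1, s1, s2 \<otimes> s1 \<otimes> s1)"
definition "h4 = tclass G (s2, s2, s1, s2 \<otimes> s2 \<otimes> s1)"

lemma b12_1: "act_word G beta12 h1 = h2"
  unfolding h1_def h2_def
  by (subst act_word_tclass, simp, rule sym, rule tclass_eqI[where g = "z \<otimes> y \<otimes> y"]) (simp_all add: beta12_def nf)

lemma b12_2: "act_word G beta12 h2 = h3"
  unfolding h2_def h3_def
  by (subst act_word_tclass, simp, rule sym, rule tclass_eqI[where g = "\<one>"]) (simp_all add: beta12_def nf)

lemma b12_3: "act_word G beta12 h3 = h1"
  unfolding h3_def h1_def
  by (subst act_word_tclass, simp, rule sym, rule tclass_eqI[where g = "y \<otimes> z"]) (simp_all add: beta12_def nf)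

lemma b12_4: "act_word G beta12 h4 = h4"
  unfolding h4_def h4_def
  by (subst act_word_tclass, simp, rule sym, rule tclass_eqI[where g = "\<one>"]) (simp_all add: beta12_def nf)

lemma b13_1: "act_word G beta13 h1 = h3"
  unfolding h1_def h3_def
  by (subst act_word_tclass, simp, rule sym, rule tclass_eqI[where g = "z \<otimes> y \<otimes> y \<otimes> z"]) (simp_all add: beta13_def nf)

lemma b13_2: "act_word G beta13 h2 = h2"
  unfolding h2_def h2_def
  by (subst act_word_tclass, simp, rule sym, rule tclass_eqI[where g = "\<one>"]) (simp_all add: beta13_def nf)

lemma b13_3: "act_word G beta13 h3 = h4"
  unfolding h3_def h4_def
  by (subst act_word_tclass, simp, rule sym, rule tclass_eqI[where g = "z \<otimes> y \<otimes> z \<otimes> y \<otimes> z"]) (simp_all add: beta13_def nf)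

lemma b13_4: "act_word G beta13 h4 = h1"
  unfolding h4_def h1_def
  by (subst act_word_tclass, simp, rule sym, rule tclass_eqI[where g = "y \<otimes> y \<otimes> z"]) (simp_all add: beta13_def nf)

lemma b14_1: "act_word G beta14 h1 = h4"
  unfolding h1_def h4_def
  by (subst act_word_tclass, simp, rule sym, rule tclass_eqI[where g = "\<one>"]) (simp_all add: beta14_def nf)

lemma b14_2: "act_word G beta14 h2 = h1"
  unfolding h2_def h1_def
  by (subst act_word_tclass, simp, rule sym, rule tclass_eqI[where g = "\<one>"]) (simp_all add: beta14_def nf)

lemma b14_3: "act_word G beta14 h3 = h3"
  unfolding h3_def h3_def
  by (subst act_word_tclass, simp, rule sym, rule tclass_eqI[where g = "y \<otimes> z \<otimes> y \<otimes> z"]) (simp_all add: beta14_def nf)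

lemma b14_4: "act_word G beta14 h4 = h2"
  unfolding h4_def h2_def
  by (subst act_word_tclass, simp, rule sym, rule tclass_eqI[where g = "\<one>"]) (simp_all add: beta14_def nf)

lemma b23_1: "act_word G beta23 h1 = h4"
  unfolding h1_def h4_def
  by (subst act_word_tclass, simp, rule sym, rule tclass_eqI[where g = "z \<otimes> y \<otimes> z"]) (simp_all add: beta23_def nf)

lemma b23_2: "act_word G beta23 h2 = h1"
  unfolding h2_def h1_def
  by (subst act_word_tclass, simp, rule sym, rule tclass_eqI[where g = "z \<otimes> y \<otimes> z"]) (simp_all add: beta23_def nf)

lemma b23_3: "act_word G beta23 h3 = h3"
  unfolding h3_def h3_def
  by (subst act_word_tclass, simp, rule sym, rule tclass_eqI[where g = "\<one>"]) (simp_all add: beta23_def nf)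

lemma b23_4: "act_word G beta23 h4 = h2"
  unfolding h4_def h2_def
  by (subst act_word_tclass, simp, rule sym, rule tclass_eqI[where g = "z \<otimes> y \<otimes> z"]) (simp_all add: beta23_def nf)

lemma b24_1: "act_word G beta24 h1 = h1"
  unfolding h1_def h1_def
  by (subst act_word_tclass, simp, rule sym, rule tclass_eqI[where g = "y \<otimes> z \<otimes> y \<otimes> z"]) (simp_all add: beta24_def nf)

lemma b24_2: "act_word G beta24 h2 = h4"
  unfolding h2_def h4_def
  by (subst act_word_tclass, simp, rule sym, rule tclass_eqI[where g = "y \<otimes> z"]) (simp_all add: beta24_def nf)

lemma b24_3: "act_word G beta24 h3 = h2"
  unfolding h3_def h2_def
  by (subst act_word_tclass, simp, rule sym, rule tclass_eqI[where g = "z \<otimes> y \<otimes> y"]) (simp_all add: beta24_def nf)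

lemma b24_4: "act_word G beta24 h4 = h3"
  unfolding h4_def h3_def
  by (subst act_word_tclass, simp, rule sym, rule tclass_eqI[where g = "\<one>"]) (simp_all add: beta24_def nf)

lemma b34_1: "act_word G beta34 h1 = h2"
  unfolding h1_def h2_def
  by (subst act_word_tclass, simp, rule sym, rule tclass_eqI[where g = "z \<otimes> y"]) (simp_all add: beta34_def nf)

lemma b34_2: "act_word G beta34 h2 = h3"
  unfolding h2_def h3_def
  by (subst act_word_tclass, simp, rule sym, rule tclass_eqI[where g = "z \<otimes> y \<otimes> y \<otimes> z"]) (simp_all add: beta34_def nf)

lemma b34_3: "act_word G beta34 h3 = h1"
  unfolding h3_def h1_def
  by (subst act_word_tclass, simp, rule sym, rule tclass_eqI[where g = "z"]) (simp_all add: beta34_def nf)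

lemma b34_4: "act_word G beta34 h4 = h4"
  unfolding h4_def h4_def
  by (subst act_word_tclass, simp, rule sym, rule tclass_eqI[where g = "z \<otimes> y \<otimes> z \<otimes> y"]) (simp_all add: beta34_def nf)

lemma comm_inv: "x \<in> carrier G \<Longrightarrow> h \<in> carrier G \<Longrightarrow> x \<otimes> h = h \<otimes> x \<Longrightarrow> x \<otimes> inv h = inv h \<otimes> x"
proof -
  assume a: "x \<in> carrier G" "h \<in> carrier G" "x \<otimes> h = h \<otimes> x"
  have "x \<otimes> inv h = inv h \<otimes> (h \<otimes> x) \<otimes> inv h" using a by (simp add: m_assoc invc1)
  also have "\<dots> = inv h \<otimes> (x \<otimes> h) \<otimes> inv h" by (simp only: a(3))
  also have "\<dots> = inv h \<otimes> x" using a(1,2) by (simp add: m_assoc)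
  finally show ?thesis .
qed

lemma comm_gen: "h \<in> generate G {s1, s2} \<Longrightarrow> x \<in> carrier G \<Longrightarrow> x \<otimes> s1 = s1 \<otimes> x \<Longrightarrow> x \<otimes> s2 = s2 \<otimes> x
   \<Longrightarrow> x \<otimes> h = h \<otimes> x"
proof (induction rule: generate.induct)
  case one thus ?case by simp
next
  case (incl h) thus ?case by auto
next
  case (inv h) thus ?case using comm_inv[of x h] by auto
next
  case (eng h1 h2)
  have c: "h1 \<in> carrier G" "h2 \<in> carrier G" using eng.hyps gen by auto
  have i1: "x \<otimes> h1 = h1 \<otimes> x" using eng.IH(1)[OF eng.prems] .
  have i2: "x \<otimes> h2 = h2 \<otimes> x" using eng.IH(2)[OF eng.prems] .
  have "x \<otimes> (h1 \<otimes> h2) = (x \<otimes> h1) \<otimes> h2" using c eng.prems(1) by (simp add: m_assoc)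
  also have "\<dots> = h1 \<otimes> (x \<otimes> h2)" using c eng.prems(1) by (simp add: i1 m_assoc)
  also have "\<dots> = (h1 \<otimes> h2) \<otimes> x" using c eng.prems(1) by (simp add: i2 m_assoc)
  finally show ?case .
qed

lemma central: "x \<in> carrier G \<Longrightarrow> x \<otimes> s1 = s1 \<otimes> x \<Longrightarrow> x \<otimes> s2 = s2 \<otimes> x \<Longrightarrow> x = \<one>"
proof -
  assume a: "x \<in> carrier G" "x \<otimes> s1 = s1 \<otimes> x" "x \<otimes> s2 = s2 \<otimes> x"
  have "\<forall>g\<in>carrier G. x \<otimes> g = g \<otimes> x"
  proof
    fix g assume "g \<in> carrier G"
    hence "g \<in> generate G {s1, s2}" using gen by simp
    thus "x \<otimes> g = g \<otimes> x" using comm_gen a by blast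
  qed
  hence "x \<in> grp_center G" unfolding grp_center_def using a(1) by blast
  thus ?thesis using cent by blast
qed

lemma noncomm: "s1 \<otimes> s2 \<noteq> s2 \<otimes> s1"
proof
  assume c: "s1 \<otimes> s2 = s2 \<otimes> s1"
  have e1: "s1 = \<one>" using central[OF _ refl c] by simp
  have e2: "s2 = \<one>" using central[OF _ c[symmetric] refl] by simp
  have "x = \<one>" if x: "x \<in> carrier G" for x
  proof (rule central[OF x])
    show "x \<otimes> s1 = s1 \<otimes> x" using x by (simp add: e1)
    show "x \<otimes> s2 = s2 \<otimes> x" using x by (simp add: e2)
  qed
  thus False using nontriv by auto
qed

lemma nc1: "s1 \<noteq> s2" using noncomm by metis

lemma nc2: "s2 \<otimes> s1 \<otimes> inv s2 \<noteq> s1"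
proof
  assume "s2 \<otimes> s1 \<otimes> inv s2 = s1"
  hence "s2 \<otimes> s1 \<otimes> inv s2 \<otimes> s2 = s1 \<otimes> s2" by simp
  moreover have "\<And>a b. a \<in> carrier G \<Longrightarrow> b \<in> carrier G \<Longrightarrow> a \<otimes> b \<otimes> inv a \<otimes> a = a \<otimes> b"
    by (simp add: m_assoc)
  ultimately have "s2 \<otimes> s1 = s1 \<otimes> s2" by (metis m_closed yc zc)
  thus False using noncomm by simp
qed

lemma gconj_fix: "g \<in> carrier G \<Longrightarrow> a \<in> carrier G \<Longrightarrow> a = gconj G g a \<Longrightarrow> g \<otimes> a = a \<otimes> g"
  unfolding gconj_def by (metis inv_solve_right m_closed)

lemma gfix: "g \<in> carrier G \<Longrightarrow> s1 = gconj G g s1 \<Longrightarrow> s2 = gconj G g s2 \<Longrightarrow> g = \<one>"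
  using central gconj_fix by (metis m_closed yc zc)

lemma gconj_inj: "g \<in> carrier G \<Longrightarrow> a \<in> carrier G \<Longrightarrow> b \<in> carrier G \<Longrightarrow> gconj G g a = gconj G g b \<Longrightarrow> a = b"
  unfolding gconj_def by (metis inv_closed m_closed r_cancel l_cancel)

lemma tconj_eqD: assumes "(a', b', c', d') = tconj G g (a, b, c, d)"
  shows "a' = gconj G g a" "b' = gconj G g b" "c' = gconj G g c" "d' = gconj G g d"
  using assms by simp_all

lemma gconj_self: "a \<in> carrier G \<Longrightarrow> gconj G a a = a"
  by (simp add: gconj_def m_assoc)

lemma ne12: "h1 \<noteq> h2"
proof
  assume "h1 = h2"
  moreover have "tc G (s1, s2, s1, s1 \<otimes> s2 \<otimes> s1)" "tc G (s2 \<otimes> s1 \<otimes> inv s2, s2, s1, s2 \<otimes> s1 \<otimes> s1)" by simp_all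
  ultimately obtain g where g: "g \<in> carrier G" and eq:
    "(s2 \<otimes> s1 \<otimes> inv s2, s2, s1, s2 \<otimes> s1 \<otimes> s1) = tconj G g (s1, s2, s1, s1 \<otimes> s2 \<otimes> s1)"
    using tclass_eqD unfolding h1_def h2_def by blast
  note e = tconj_eqD[OF eq]
  have "g = \<one>" using gfix[OF g e(3) e(2)] .
  hence "s2 \<otimes> s1 \<otimes> inv s2 = s1" using e(1) by simp
  thus False using nc2 by blast
qed

lemma ne13: "h1 \<noteq> h3"
proof
  assume "h1 = h3"
  moreover have "tc G (s1, s2, s1, s1 \<otimes> s2 \<otimes> s1)" "tc G (s2, s1, s1, s2 \<otimes> s1 \<otimes> s1)" by simp_all
  ultimately obtain g where g: "g \<in> carrier G" and eq:
    "(s2, s1, s1, s2 \<otimes> s1 \<otimes> s1) = tconj G g (s1, s2, s1, s1 \<otimes> s2 \<otimes> s1)"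
    using tclass_eqD unfolding h1_def h3_def by blast
  note e = tconj_eqD[OF eq]
  have "s2 = s1" using e(1)[unfolded e(3)[symmetric]] .
  thus False using nc1 by metis
qed

lemma ne14: "h1 \<noteq> h4"
proof
  assume "h1 = h4"
  moreover have "tc G (s1, s2, s1, s1 \<otimes> s2 \<otimes> s1)" "tc G (s2, s2, s1, s2 \<otimes> s2 \<otimes> s1)" by simp_all
  ultimately obtain g where g: "g \<in> carrier G" and eq:
    "(s2, s2, s1, s2 \<otimes> s2 \<otimes> s1) = tconj G g (s1, s2, s1, s1 \<otimes> s2 \<otimes> s1)"
    using tclass_eqD unfolding h1_def h4_def by blast
  note e = tconj_eqD[OF eq]
  have "g = \<one>" using gfix[OF g e(3) e(2)] .
  hence "s2 = s1" using e(1) by simp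
  thus False using nc1 by metis
qed

lemma ne23: "h2 \<noteq> h3"
proof
  assume "h2 = h3"
  moreover have "tc G (s2 \<otimes> s1 \<otimes> inv s2, s2, s1, s2 \<otimes> s1 \<otimes> s1)" "tc G (s2, s1, s1, s2 \<otimes> s1 \<otimes> s1)" by simp_all
  ultimately obtain g where g: "g \<in> carrier G" and eq:
    "(s2, s1, s1, s2 \<otimes> s1 \<otimes> s1) = tconj G g (s2 \<otimes> s1 \<otimes> inv s2, s2, s1, s2 \<otimes> s1 \<otimes> s1)"
    using tclass_eqD unfolding h2_def h3_def by blast
  note e = tconj_eqD[OF eq]
  have "s2 = s1" using gconj_inj[OF g _ _ trans[OF e(2)[symmetric] e(3)]] by simp
  thus False using nc1 by metis
qed

lemma ne24: "h2 \<noteq> h4"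
proof
  assume "h2 = h4"
  moreover have "tc G (s2 \<otimes> s1 \<otimes> inv s2, s2, s1, s2 \<otimes> s1 \<otimes> s1)" "tc G (s2, s2, s1, s2 \<otimes> s2 \<otimes> s1)" by simp_all
  ultimately obtain g where g: "g \<in> carrier G" and eq:
    "(s2, s2, s1, s2 \<otimes> s2 \<otimes> s1) = tconj G g (s2 \<otimes> s1 \<otimes> inv s2, s2, s1, s2 \<otimes> s1 \<otimes> s1)"
    using tclass_eqD unfolding h2_def h4_def by blast
  note e = tconj_eqD[OF eq]
  have "g = \<one>" using gfix[OF g e(3) e(2)] .
  hence "s2 = gconj G s2 s1" using e(1) by (simp add: gconj_def)
  hence "gconj G s2 s2 = gconj G s2 s1" using gconj_self[of s2] by simp
  hence "s2 = s1" using gconj_inj[of s2 s2 s1] by simp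
  thus False using nc1 by metis
qed

lemma ne34: "h3 \<noteq> h4"
proof
  assume "h3 = h4"
  moreover have "tc G (s2, s1, s1, s2 \<otimes> s1 \<otimes> s1)" "tc G (s2, s2, s1, s2 \<otimes> s2 \<otimes> s1)" by simp_all
  ultimately obtain g where g: "g \<in> carrier G" and eq:
    "(s2, s2, s1, s2 \<otimes> s2 \<otimes> s1) = tconj G g (s2, s1, s1, s2 \<otimes> s1 \<otimes> s1)"
    using tclass_eqD unfolding h3_def h4_def by blast
  note e = tconj_eqD[OF eq]
  have "g = \<one>" using gfix[OF g e(3) e(1)] .
  hence "s2 = s1" using e(2) by simp
  thus False using nc1 by metis
qed

lemma ccI: "g \<in> carrier G \<Longrightarrow> x = gconj G g a \<Longrightarrow> x \<in> conj_class G a"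
  unfolding conj_class_def by blast

lemma genI: "a \<in> carrier G \<Longrightarrow> b \<in> carrier G \<Longrightarrow> c \<in> carrier G \<Longrightarrow> d \<in> carrier G \<Longrightarrow>
  s1 \<in> {a, b, c, d} \<Longrightarrow> s2 \<in> {a, b, c, d} \<Longrightarrow> generate G {a, b, c, d} = carrier G"
proof
  assume *: "a \<in> carrier G" "b \<in> carrier G" "c \<in> carrier G" "d \<in> carrier G"
    "s1 \<in> {a, b, c, d}" "s2 \<in> {a, b, c, d}"
  show "generate G {a, b, c, d} \<subseteq> carrier G" using * generate_incl by simp
  have "generate G {s1, s2} \<subseteq> generate G {a, b, c, d}" using * by (intro mono_generate) auto
  thus "carrier G \<subseteq> generate G {a, b, c, d}" using gen by simp
qed

abbreviation "CC \<equiv> conj_class G s1"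
abbreviation "DD \<equiv> conj_class G (s1 \<otimes> s2 \<otimes> s1)"

lemma sig1: "h1 \<in> Sigma_i G CC CC CC DD"
  unfolding Sigma_i_def h1_def
  apply (rule CollectI, intro exI conjI, rule refl)
  apply (rule ccI[where g = "\<one>"], simp, simp)
  apply (rule ccI[where g = "z"], simp, simp add: nf)
  apply (rule ccI[where g = "\<one>"], simp, simp)
  apply (rule ccI[where g = "\<one>"], simp, simp)
  apply (rule genI; simp)
  apply (simp add: nf)
  done

lemma sig2: "h2 \<in> Sigma_i G CC CC CC DD"
  unfolding Sigma_i_def h2_def
  apply (rule CollectI, intro exI conjI, rule refl)
  apply (rule ccI[where g = "z \<otimes> y"], simp, simp add: nf)
  apply (rule ccI[where g = "z"], simp, simp add: nf)
  apply (rule ccI[where g = "\<one>"], simp, simp)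
  apply (rule ccI[where g = "inv (y \<otimes> z)"], simp, simp add: nf)
  apply (rule genI; simp)
  apply (simp add: nf)
  done

lemma sig3: "h3 \<in> Sigma_i G CC CC CC DD"
  unfolding Sigma_i_def h3_def
  apply (rule CollectI, intro exI conjI, rule refl)
  apply (rule ccI[where g = "z"], simp, simp add: nf)
  apply (rule ccI[where g = "\<one>"], simp, simp)
  apply (rule ccI[where g = "\<one>"], simp, simp)
  apply (rule ccI[where g = "inv (y \<otimes> z)"], simp, simp add: nf)
  apply (rule genI; simp)
  apply (simp add: nf)
  done

lemma sig4: "h4 \<in> Sigma_i G CC CC CC DD"
  unfolding Sigma_i_def h4_def
  apply (rule CollectI, intro exI conjI, rule refl)
  apply (rule ccI[where g = "z"], simp, simp add: nf)
  apply (rule ccI[where g = "z"], simp, simp add: nf)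
  apply (rule ccI[where g = "\<one>"], simp, simp)
  apply (rule ccI[where g = "z \<otimes> (y \<otimes> z)"], simp, simp add: nf)
  apply (rule genI; simp)
  apply (simp add: nf)
  done

definition "H i = (if i = (1::nat) then h1 else if i = 2 then h2 else if i = 3 then h3 else h4)"
abbreviation "ZZ \<equiv> {h1, h2, h3, h4}"
abbreviation "A4 \<equiv> carrier (alt_group 4)"
definition "realizes w p \<longleftrightarrow> (\<forall>i\<in>{1..4}. act_word G w (H i) = H (p i))"

lemma four: "(i::nat) \<in> {1..4} \<Longrightarrow> i = 1 \<or> i = 2 \<or> i = 3 \<or> i = 4" by auto

lemma Hin: "i \<in> {1..4} \<Longrightarrow> H i \<in> ZZ"
  using four[of i] by (auto simp: H_def)

lemma ZZ_H: "x \<in> ZZ \<Longrightarrow> \<exists>i\<in>{1..4}. x = H i"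
proof -
  assume "x \<in> ZZ"
  hence "x = H 1 \<or> x = H 2 \<or> x = H 3 \<or> x = H 4" by (simp add: H_def)
  moreover have "(1::nat) \<in> {1..4}" "(2::nat) \<in> {1..4}" "(3::nat) \<in> {1..4}" "(4::nat) \<in> {1..4}"
    by simp_all
  ultimately show ?thesis by blast
qed

lemmas nes = ne12 ne13 ne14 ne23 ne24 ne34 ne12[THEN not_sym] ne13[THEN not_sym] ne14[THEN not_sym]
  ne23[THEN not_sym] ne24[THEN not_sym] ne34[THEN not_sym]

lemma H_inj: "i \<in> {1..4} \<Longrightarrow> j \<in> {1..4} \<Longrightarrow> H i = H j \<Longrightarrow> i = j"
  apply (drule four, drule four)
  apply (elim disjE)
  apply (simp_all add: H_def nes)
  done

lemma tcH: "i \<in> {1..4} \<Longrightarrow> \<exists>t. tc G t \<and> H i = tclass G t"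
  apply (drule four, elim disjE)
  apply (rule exI[of _ "(s1, s2, s1, s1 \<otimes> s2 \<otimes> s1)"], simp add: H_def h1_def)
  apply (rule exI[of _ "(s2 \<otimes> s1 \<otimes> inv s2, s2, s1, s2 \<otimes> s1 \<otimes> s1)"], simp add: H_def h2_def)
  apply (rule exI[of _ "(s2, s1, s1, s2 \<otimes> s1 \<otimes> s1)"], simp add: H_def h3_def)
  apply (rule exI[of _ "(s2, s2, s1, s2 \<otimes> s2 \<otimes> s1)"], simp add: H_def h4_def)
  done

lemma act_word_app: "act_word G (u @ v) Y = act_word G v (act_word G u Y)"
  by (simp add: act_word_def)

lemma cyc: "x \<in> {1..4} \<Longrightarrow> y' \<in> {1..4} \<Longrightarrow> w \<in> {1..4} \<Longrightarrow> x \<noteq> y' \<Longrightarrow> y' \<noteq> w \<Longrightarrow>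
   Transposition.transpose x y' \<circ> Transposition.transpose y' w \<in> A4"
  unfolding alt_group_carrier
  by (simp add: permutes_compose permutes_swap_id evenperm_comp permutation_swap_id evenperm_swap)

definition "pa = Transposition.transpose (1::nat) 2 \<circ> Transposition.transpose 2 3"
definition "pb = Transposition.transpose (1::nat) 3 \<circ> Transposition.transpose 3 4"
definition "pc = Transposition.transpose (1::nat) 4 \<circ> Transposition.transpose 4 2"
definition "pd = Transposition.transpose (2::nat) 4 \<circ> Transposition.transpose 4 3"

lemma pA4: "pa \<in> A4" "pb \<in> A4" "pc \<in> A4" "pd \<in> A4"
  unfolding pa_def pb_def pc_def pd_def by (rule cyc; simp)+

lemma real_12: "realizes beta12 pa"
  unfolding realizes_def
proof
  fix i :: nat assume "i \<in> {1..4}"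
  hence "i = 1 \<or> i = 2 \<or> i = 3 \<or> i = 4" by (rule four)
  thus "act_word G beta12 (H i) = H (pa i)"
    by (elim disjE) (simp_all add: H_def pa_def transpose_def b12_1 b12_2 b12_3 b12_4)
qed

lemma real_13: "realizes beta13 pb"
  unfolding realizes_def
proof
  fix i :: nat assume "i \<in> {1..4}"
  hence "i = 1 \<or> i = 2 \<or> i = 3 \<or> i = 4" by (rule four)
  thus "act_word G beta13 (H i) = H (pb i)"
    by (elim disjE) (simp_all add: H_def pb_def transpose_def b13_1 b13_2 b13_3 b13_4)
qed

lemma real_14: "realizes beta14 pc"
  unfolding realizes_def
proof
  fix i :: nat assume "i \<in> {1..4}"
  hence "i = 1 \<or> i = 2 \<or> i = 3 \<or> i = 4" by (rule four)
  thus "act_word G beta14 (H i) = H (pc i)"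
    by (elim disjE) (simp_all add: H_def pc_def transpose_def b14_1 b14_2 b14_3 b14_4)
qed

lemma real_23: "realizes beta23 pc"
  unfolding realizes_def
proof
  fix i :: nat assume "i \<in> {1..4}"
  hence "i = 1 \<or> i = 2 \<or> i = 3 \<or> i = 4" by (rule four)
  thus "act_word G beta23 (H i) = H (pc i)"
    by (elim disjE) (simp_all add: H_def pc_def transpose_def b23_1 b23_2 b23_3 b23_4)
qed

lemma real_24: "realizes beta24 pd"
  unfolding realizes_def
proof
  fix i :: nat assume "i \<in> {1..4}"
  hence "i = 1 \<or> i = 2 \<or> i = 3 \<or> i = 4" by (rule four)
  thus "act_word G beta24 (H i) = H (pd i)"
    by (elim disjE) (simp_all add: H_def pd_def transpose_def b24_1 b24_2 b24_3 b24_4)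
qed

lemma real_34: "realizes beta34 pa"
  unfolding realizes_def
proof
  fix i :: nat assume "i \<in> {1..4}"
  hence "i = 1 \<or> i = 2 \<or> i = 3 \<or> i = 4" by (rule four)
  thus "act_word G beta34 (H i) = H (pa i)"
    by (elim disjE) (simp_all add: H_def pa_def transpose_def b34_1 b34_2 b34_3 b34_4)
qed

lemmas real_gens = real_12 real_13 real_14 real_23 real_24 real_34

lemma A4_perm: "p \<in> A4 \<Longrightarrow> p permutes {1..4}"
  by (simp add: alt_group_carrier)

lemma A4_in: "p \<in> A4 \<Longrightarrow> i \<in> {1..4} \<Longrightarrow> p i \<in> {1..4}"
proof -
  assume p: "p \<in> A4" and i: "i \<in> {1..4}"
  show ?thesis using i by (simp only: permutes_in_image[OF A4_perm[OF p]])
qed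

lemma real_inv: "realizes w p \<Longrightarrow> p \<in> A4 \<Longrightarrow> realizes (inv_word w) (inv' p)"
  unfolding realizes_def
proof
  fix i :: nat assume r: "\<forall>i\<in>{1..4}. act_word G w (H i) = H (p i)" and p: "p \<in> A4" and i: "i \<in> {1..4}"
  have ip: "inv' p \<in> A4" using p by (rule alt_group_inv_closed)
  define j where "j = inv' p i"
  have j: "j \<in> {1..4}" unfolding j_def by (rule A4_in[OF ip i])
  have pj: "p j = i" unfolding j_def using A4_perm[OF p] by (rule permutes_inverses(1))
  have hj: "act_word G w (H j) = H (p j)" using r j by blast
  obtain t where tc: "tc G t" and ht: "H j = tclass G t" using tcH[OF j] by blast
  have e: "H i = act_word G w (tclass G t)" using hj unfolding pj ht by (rule sym)
  have "act_word G (inv_word w) (H i) = tclass G t" unfolding e by (rule act_word_inv[OF tc])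
  thus "act_word G (inv_word w) (H i) = H (inv' p i)" unfolding ht[symmetric] j_def .
qed

lemma real_app: "realizes u p \<Longrightarrow> realizes v q \<Longrightarrow> p \<in> A4 \<Longrightarrow> realizes (u @ v) (q \<circ> p)"
  unfolding realizes_def
proof
  fix i :: nat assume r1: "\<forall>i\<in>{1..4}. act_word G u (H i) = H (p i)"
    and r2: "\<forall>i\<in>{1..4}. act_word G v (H i) = H (q i)" and p: "p \<in> A4" and i: "i \<in> {1..4}"
  have pi: "p i \<in> {1..4}" by (rule A4_in[OF p i])
  have "act_word G (u @ v) (H i) = act_word G v (act_word G u (H i))" by (rule act_word_app)
  also have "\<dots> = act_word G v (H (p i))" using r1 i by simp
  also have "\<dots> = H (q (p i))" using r2 pi by blast
  finally show "act_word G (u @ v) (H i) = H ((q \<circ> p) i)" by simp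
qed

lemma A4_comp: "p \<in> A4 \<Longrightarrow> q \<in> A4 \<Longrightarrow> q \<circ> p \<in> A4"
proof -
  assume p: "p \<in> A4" and q: "q \<in> A4"
  have pp: "p permutes {1..4}" "evenperm p" using p by (simp_all add: alt_group_carrier)
  have qq: "q permutes {1..4}" "evenperm q" using q by (simp_all add: alt_group_carrier)
  have pe: "permutation p" by (rule permutes_imp_permutation[OF _ pp(1)]) simp
  have qe: "permutation q" by (rule permutes_imp_permutation[OF _ qq(1)]) simp
  have "evenperm (q \<circ> p)" using evenperm_comp[OF qe pe] pp(2) qq(2) by simp
  moreover have "q \<circ> p permutes {1..4}" using permutes_compose[OF pp(1) qq(1)] .
  ultimately show ?thesis by (simp add: alt_group_carrier)
qed

lemma A4_id: "id \<in> A4"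
  using monoid.one_closed[OF group.is_monoid[OF alt_group_is_group[of 4]]] by (simp add: alt_group_one)

lemma real_nil: "realizes [] id"
  by (simp add: realizes_def act_word_def)

lemma gens_real: "g \<in> pure_gens \<union> inv_word ` pure_gens \<Longrightarrow> \<exists>p\<in>A4. realizes g p"
proof -
  have ex: "\<exists>p\<in>A4. realizes beta12 p" "\<exists>p\<in>A4. realizes beta13 p" "\<exists>p\<in>A4. realizes beta14 p"
    "\<exists>p\<in>A4. realizes beta23 p" "\<exists>p\<in>A4. realizes beta24 p" "\<exists>p\<in>A4. realizes beta34 p"
    using real_gens pA4 by blast+
  have a: "\<forall>g\<in>pure_gens. \<exists>p\<in>A4. realizes g p"
    unfolding pure_gens_def using ex by simp
  have b: "\<forall>g\<in>pure_gens. \<exists>p\<in>A4. realizes (inv_word g) p"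
  proof
    fix g assume "g \<in> pure_gens"
    then obtain p where "p \<in> A4" "realizes g p" using a by blast
    thus "\<exists>p\<in>A4. realizes (inv_word g) p" using real_inv alt_group_inv_closed by blast
  qed
  assume "g \<in> pure_gens \<union> inv_word ` pure_gens"
  thus ?thesis using a b by blast
qed

lemma pw_real: "w \<in> pure_words \<Longrightarrow> \<exists>p\<in>A4. realizes w p"
proof -
  assume "w \<in> pure_words"
  then obtain ws where ws: "w = concat ws" "set ws \<subseteq> pure_gens \<union> inv_word ` pure_gens"
    unfolding pure_words_def by blast
  have "\<exists>p\<in>A4. realizes (concat ws) p" using ws(2)
  proof (induction ws)
    case Nil thus ?case using real_nil A4_id by auto
  next
    case (Cons g ws)
    obtain p where p: "p \<in> A4" "realizes g p" using gens_real Cons.prems by auto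
    obtain q where q: "q \<in> A4" "realizes (concat ws) q" using Cons by auto
    show ?case using real_app[OF p(2) q(2) p(1)] A4_comp[OF p(1) q(1)] by auto
  qed
  thus ?thesis using ws by simp
qed

lemma pw_app: "u \<in> pure_words \<Longrightarrow> v \<in> pure_words \<Longrightarrow> u @ v \<in> pure_words"
proof -
  assume "u \<in> pure_words" "v \<in> pure_words"
  then obtain us vs where "u = concat us" "set us \<subseteq> pure_gens \<union> inv_word ` pure_gens"
    "v = concat vs" "set vs \<subseteq> pure_gens \<union> inv_word ` pure_gens"
    unfolding pure_words_def by blast
  thus ?thesis unfolding pure_words_def by (intro CollectI exI[of _ "us @ vs"]) auto
qed

lemma pw_nil: "[] \<in> pure_words"
  unfolding pure_words_def by (intro CollectI exI[of _ "[]"]) auto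

lemma pw_gen: "g \<in> pure_gens \<Longrightarrow> g \<in> pure_words"
  unfolding pure_words_def by (intro CollectI exI[of _ "[g]"]) auto

lemma orbit: "orbitB G h1 = ZZ"
proof
  show "orbitB G h1 \<subseteq> ZZ"
  proof
    fix x assume "x \<in> orbitB G h1"
    then obtain w where w: "w \<in> pure_words" "x = act_word G w h1" unfolding orbitB_def by blast
    obtain p where p: "p \<in> A4" "realizes w p" using pw_real[OF w(1)] by blast
    have "act_word G w (H 1) = H (p 1)" using p(2) unfolding realizes_def by simp
    moreover have "H 1 = h1" by (simp add: H_def)
    ultimately have "x = H (p 1)" using w(2) by simp
    thus "x \<in> ZZ" using Hin A4_in[OF p(1)] by simp
  qed
  have m: "act_word G w h1 \<in> orbitB G h1" if "w \<in> pure_words" for w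
    unfolding orbitB_def using that by blast
  have "beta12 \<in> pure_words" "beta13 \<in> pure_words" "beta14 \<in> pure_words"
    using pw_gen by (simp_all add: pure_gens_def)
  hence "act_word G [] h1 \<in> orbitB G h1" "act_word G beta12 h1 \<in> orbitB G h1"
    "act_word G beta13 h1 \<in> orbitB G h1" "act_word G beta14 h1 \<in> orbitB G h1"
    using m pw_nil by blast+
  thus "ZZ \<subseteq> orbitB G h1" by (simp add: act_word_def[of G "[]"] b12_1 b13_1 b14_1)
qed

definition "Psi p = restrict (\<lambda>x. H (inv' p (the_inv_into {1..4} H x))) ZZ"

lemma H_inj_on: "inj_on H {1..4}"
  using H_inj by (meson inj_onI)

lemma idxH: "i \<in> {1..4} \<Longrightarrow> the_inv_into {1..4} H (H i) = i"
  using the_inv_into_f_f[OF H_inj_on] by blast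

lemma Psi_H: "i \<in> {1..4} \<Longrightarrow> Psi p (H i) = H (inv' p i)"
  unfolding Psi_def using Hin idxH by simp

lemma restrict_eqI: "(\<And>i. i \<in> {1..4} \<Longrightarrow> f (H i) = g (H i)) \<Longrightarrow> restrict f ZZ = restrict g ZZ"
proof
  fix x assume a: "\<And>i. i \<in> {1..4} \<Longrightarrow> f (H i) = g (H i)"
  show "restrict f ZZ x = restrict g ZZ x"
  proof (cases "x \<in> ZZ")
    case True
    then obtain i where "i \<in> {1..4}" "x = H i" using ZZ_H by blast
    thus ?thesis using a True by simp
  qed simp
qed

lemma inv_inv_A4: "p \<in> A4 \<Longrightarrow> inv' (inv' p) = p"
  by (rule inv_inv_eq[OF permutes_bij[OF A4_perm]])

lemma rho_Psi: "realizes w p \<Longrightarrow> p \<in> A4 \<Longrightarrow> rho G ZZ w = Psi (inv' p)"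
proof -
  assume r: "realizes w p" and p: "p \<in> A4"
  have "restrict (act_word G w) ZZ = restrict (\<lambda>x. H (inv' (inv' p) (the_inv_into {1..4} H x))) ZZ"
  proof (rule restrict_eqI)
    fix i :: nat assume i: "i \<in> {1..4}"
    show "act_word G w (H i) = H (inv' (inv' p) (the_inv_into {1..4} H (H i)))"
      using r i unfolding realizes_def idxH[OF i] inv_inv_A4[OF p] by simp
  qed
  thus ?thesis unfolding rho_def Psi_def .
qed

lemma inv_A4_eq: "p \<in> A4 \<Longrightarrow> q \<in> A4 \<Longrightarrow> inv' p = inv' q \<Longrightarrow> p = q"
  using inv_inv_A4 by metis

lemma Psi_inj: "inj_on Psi A4"
proof (rule inj_onI)
  fix p q assume p: "p \<in> A4" and q: "q \<in> A4" and e: "Psi p = Psi q"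
  have ip: "inv' p permutes {1..4}" "inv' q permutes {1..4}" using permutes_inv[OF A4_perm[OF p]] permutes_inv[OF A4_perm[OF q]] by simp_all
  have "inv' p i = inv' q i" for i
  proof (cases "i \<in> {1..4}")
    case True
    have h: "H (inv' p i) = H (inv' q i)" using Psi_H[OF True, of p] Psi_H[OF True, of q] e by simp
    have "inv' p i \<in> {1..4}" using True by (simp only: permutes_in_image[OF ip(1)])
    moreover have "inv' q i \<in> {1..4}" using True by (simp only: permutes_in_image[OF ip(2)])
    ultimately show ?thesis using H_inj h by blast
  next
    case False thus ?thesis using permutes_not_in[OF ip(1) False] permutes_not_in[OF ip(2) False] by simp
  qed
  hence "inv' p = inv' q" by blast
  thus "p = q" using inv_A4_eq p q by blast
qed

definition "RP = {p \<in> A4. \<exists>w\<in>pure_words. realizes w p}"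

lemma RP_comp: "p \<in> RP \<Longrightarrow> q \<in> RP \<Longrightarrow> q \<circ> p \<in> RP"
proof -
  assume "p \<in> RP" "q \<in> RP"
  then obtain u v where p: "p \<in> A4" "u \<in> pure_words" "realizes u p"
    and q: "q \<in> A4" "v \<in> pure_words" "realizes v q" unfolding RP_def by blast
  have "realizes (u @ v) (q \<circ> p)" by (rule real_app[OF p(3) q(3) p(1)])
  moreover have "u @ v \<in> pure_words" by (rule pw_app[OF p(2) q(2)])
  moreover have "q \<circ> p \<in> A4" by (rule A4_comp[OF p(1) q(1)])
  ultimately show ?thesis unfolding RP_def by blast
qed

lemma RP_base: "id \<in> RP" "pa \<in> RP" "pb \<in> RP" "pc \<in> RP"
  unfolding RP_def using A4_id real_nil pw_nil pA4 real_gens pw_gen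
  by (auto simp: pure_gens_def)

definition "SS = {id, pa, pb, pc, pa \<circ> pa, pb \<circ> pa, pc \<circ> pa, pb \<circ> pb, pb \<circ> pa \<circ> pa,
   pc \<circ> pa \<circ> pa, pb \<circ> pb \<circ> pa, pb \<circ> pb \<circ> pa \<circ> pa}"

lemma SS_RP: "SS \<subseteq> RP"
  unfolding SS_def by (auto intro!: RP_comp RP_base)

lemma card_SS: "12 \<le> card SS"
proof -
  let ?ev = "\<lambda>p::nat\<Rightarrow>nat. (p 1, p 2, p 3, p 4)"
  have "card (?ev ` SS) = 12"
    unfolding SS_def pa_def pb_def pc_def by (simp add: transpose_def)
  moreover have "card (?ev ` SS) \<le> card SS" by (rule card_image_le) (simp add: SS_def)
  ultimately show ?thesis by simp
qed

lemma card_A4: "card A4 = 12"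
  using alt_group_card_carrier[of 4] by (simp add: fact_numeral)

lemma carrier_eq: "rho G ZZ ` pure_words = Psi ` A4"
proof -
  have sub: "rho G ZZ ` pure_words \<subseteq> Psi ` A4"
  proof
    fix f assume "f \<in> rho G ZZ ` pure_words"
    then obtain w where w: "w \<in> pure_words" "f = rho G ZZ w" by blast
    obtain p where p: "p \<in> A4" "realizes w p" using pw_real[OF w(1)] by blast
    show "f \<in> Psi ` A4" using rho_Psi[OF p(2) p(1)] w alt_group_inv_closed[OF p(1)] by blast
  qed
  have finA: "finite A4" by (rule card_ge_0_finite) (simp add: card_A4)
  have c1: "card (Psi ` A4) = 12" using card_image[OF Psi_inj] card_A4 by simp
  have inj2: "inj_on (\<lambda>p. Psi (inv' p)) SS"
  proof (rule inj_onI)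
    fix p q assume "p \<in> SS" "q \<in> SS" "Psi (inv' p) = Psi (inv' q)"
    moreover have "p \<in> A4" "q \<in> A4" using calculation SS_RP RP_def by auto
    ultimately show "p = q"
      using Psi_inj alt_group_inv_closed inv_A4_eq by (meson inj_onD)
  qed
  have sub2: "(\<lambda>p. Psi (inv' p)) ` SS \<subseteq> rho G ZZ ` pure_words"
  proof
    fix f assume "f \<in> (\<lambda>p. Psi (inv' p)) ` SS"
    then obtain p where p: "p \<in> SS" "f = Psi (inv' p)" by blast
    then obtain w where w: "w \<in> pure_words" "realizes w p" "p \<in> A4" using SS_RP RP_def by auto
    have "f = rho G ZZ w" using rho_Psi[OF w(2) w(3)] p(2) by simp
    thus "f \<in> rho G ZZ ` pure_words" using w(1) by blast
  qed
  have "12 \<le> card ((\<lambda>p. Psi (inv' p)) ` SS)" using card_image[OF inj2] card_SS by simp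
  also have "\<dots> \<le> card (rho G ZZ ` pure_words)"
    using sub2 sub finA by (meson card_mono finite_imageI finite_subset)
  finally have "card (Psi ` A4) \<le> card (rho G ZZ ` pure_words)" using c1 by simp
  thus ?thesis using sub finA by (simp add: card_seteq)
qed

lemma iso: "rho_group G ZZ \<cong> alt_group 4"
proof -
  have hom: "Psi \<in> hom (alt_group 4) (rho_group G ZZ)"
    unfolding hom_def
  proof (intro CollectI conjI ballI)
    show "Psi \<in> A4 \<rightarrow> carrier (rho_group G ZZ)"
      using carrier_eq by (auto simp: rho_group_def)
    fix p q assume p: "p \<in> A4" and q: "q \<in> A4"
    have bp: "bij p" "bij q" using permutes_bij[OF A4_perm[OF p]] permutes_bij[OF A4_perm[OF q]] by simp_all
    have "Psi (p \<circ> q) = restrict (Psi q \<circ> Psi p) ZZ"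
      unfolding Psi_def[of "p \<circ> q"]
    proof (rule restrict_eqI)
      fix i :: nat assume i: "i \<in> {1..4}"
      have "inv' p i \<in> {1..4}" using A4_in[OF alt_group_inv_closed[OF p] i] .
      thus "H (inv' (p \<circ> q) (the_inv_into {1..4} H (H i))) = (Psi q \<circ> Psi p) (H i)"
        unfolding idxH[OF i] o_apply Psi_H[OF i] o_inv_distrib[OF bp] by (simp add: Psi_H)
    qed
    thus "Psi (p \<otimes>\<^bsub>alt_group 4\<^esub> q) = Psi p \<otimes>\<^bsub>rho_group G ZZ\<^esub> Psi q"
      by (simp add: alt_group_mult rho_group_def)
  qed
  have "bij_betw Psi A4 (carrier (rho_group G ZZ))"
    using Psi_inj carrier_eq by (simp add: bij_betw_def rho_group_def)
  hence "alt_group 4 \<cong> rho_group G ZZ" using hom by (blast intro: is_isoI isoI)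
  thus ?thesis using group.iso_sym[OF alt_group_is_group] by blast
qed

lemma ncyc_ZZ: "ncycles (act_word G beta12) ZZ = 2" "ncycles (act_word G beta13) ZZ = 2"
  "ncycles (act_word G beta14) ZZ = 2"
proof -
  have d: "h1 \<noteq> h2" "h1 \<noteq> h3" "h1 \<noteq> h4" "h2 \<noteq> h3" "h2 \<noteq> h4" "h3 \<noteq> h4"
    using ne12 ne13 ne14 ne23 ne24 ne34 by auto
  show "ncycles (act_word G beta12) ZZ = 2"
    using ncyc[where a=h1 and b=h2 and c=h3 and d=h4 and f="act_word G beta12"] d b12_1 b12_2 b12_3 b12_4 by auto
  have "ZZ = {h1, h3, h4, h2}" by auto
  thus "ncycles (act_word G beta13) ZZ = 2"
    using ncyc[where a=h1 and b=h3 and c=h4 and d=h2 and f="act_word G beta13"] d b13_1 b13_2 b13_3 b13_4 by auto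
  have "ZZ = {h1, h4, h2, h3}" by auto
  thus "ncycles (act_word G beta14) ZZ = 2"
    using ncyc[where a=h1 and b=h4 and c=h2 and d=h3 and f="act_word G beta14"] d b14_1 b14_2 b14_3 b14_4 by auto
qed

lemma card_ZZ: "card ZZ = 4"
  using ne12 ne13 ne14 ne23 ne24 ne34 by simp

lemma main: "let C = conj_class G s1; D = conj_class G (s1 \<otimes> s2 \<otimes> s1);
             h1 = tclass G (s1, s2, s1, s1 \<otimes> s2 \<otimes> s1);
             h2 = tclass G (s2 \<otimes> s1 \<otimes> inv s2, s2, s1, s2 \<otimes> s1 \<otimes> s1);
             h3 = tclass G (s2, s1, s1, s2 \<otimes> s1 \<otimes> s1);
             h4 = tclass G (s2, s2, s1, s2 \<otimes> s2 \<otimes> s1);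
             Z = {h1, h2, h3, h4}
         in orbitB G h1 = Z \<and> card Z = 4 \<and> Z \<subseteq> Sigma_i G C C C D
          \<and> act_word G beta12 h1 = h2 \<and> act_word G beta12 h2 = h3
          \<and> act_word G beta12 h3 = h1 \<and> act_word G beta12 h4 = h4
          \<and> act_word G beta13 h1 = h3 \<and> act_word G beta13 h3 = h4
          \<and> act_word G beta13 h4 = h1 \<and> act_word G beta13 h2 = h2
          \<and> act_word G beta14 h1 = h4 \<and> act_word G beta14 h4 = h2
          \<and> act_word G beta14 h2 = h1 \<and> act_word G beta14 h3 = h3
          \<and> rho_group G Z \<cong> alt_group 4
          \<and> genus G Z = 0"
  unfolding Let_def h1_def[symmetric] h2_def[symmetric] h3_def[symmetric] h4_def[symmetric]
  using orbit card_ZZ sig1 sig2 sig3 sig4 b12_1 b12_2 b12_3 b12_4 b13_1 b13_2 b13_3 b13_4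
    b14_1 b14_2 b14_3 b14_4 iso ncyc_ZZ
  by (simp add: genus_def)

end

theorem theorem6:
  fixes G (structure) and s1 s2 :: 'a
  assumes "group G" and "finite (carrier G)" and "carrier G \<noteq> {\<one>}"
    and "grp_center G = {\<one>}"
    and "s1 \<in> carrier G" and "s2 \<in> carrier G"
    and "generate G {s1, s2} = carrier G"
    and "s1 \<otimes> s2 \<otimes> s1 = s2 \<otimes> s1 \<otimes> s2"
    and "group.ord G (s1 \<otimes> s2 \<otimes> s1) = 2"
  shows "let C = conj_class G s1; D = conj_class G (s1 \<otimes> s2 \<otimes> s1);
             h1 = tclass G (s1, s2, s1, s1 \<otimes> s2 \<otimes> s1);
             h2 = tclass G (s2 \<otimes> s1 \<otimes> inv s2, s2, s1, s2 \<otimes> s1 \<otimes> s1);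
             h3 = tclass G (s2, s1, s1, s2 \<otimes> s1 \<otimes> s1);
             h4 = tclass G (s2, s2, s1, s2 \<otimes> s2 \<otimes> s1);
             Z = {h1, h2, h3, h4}
         in orbitB G h1 = Z \<and> card Z = 4 \<and> Z \<subseteq> Sigma_i G C C C D
          \<and> act_word G beta12 h1 = h2 \<and> act_word G beta12 h2 = h3
          \<and> act_word G beta12 h3 = h1 \<and> act_word G beta12 h4 = h4
          \<and> act_word G beta13 h1 = h3 \<and> act_word G beta13 h3 = h4
          \<and> act_word G beta13 h4 = h1 \<and> act_word G beta13 h2 = h2
          \<and> act_word G beta14 h1 = h4 \<and> act_word G beta14 h4 = h2
          \<and> act_word G beta14 h2 = h1 \<and> act_word G beta14 h3 = h3
          \<and> rho_group G Z \<cong> alt_group 4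
          \<and> genus G Z = 0"
proof -
  interpret group G by (rule assms(1))
  note s1c = assms(5) and s2c = assms(6) and braid = assms(8)
  define zz where "zz = s1 \<otimes> s2 \<otimes> s1"
  define yy where "yy = s1 \<otimes> zz"
  have zc: "zz \<in> carrier G" and yc: "yy \<in> carrier G" using s1c s2c by (simp_all add: zz_def yy_def)
  have zz2: "zz \<otimes> zz = \<one>"
  proof -
    have "zz [^] ord zz = \<one>" using zc by simp
    hence "zz [^] (2::nat) = \<one>" using assms(9) by (simp add: zz_def)
    thus ?thesis using zc by (simp add: numeral_2_eq_2)
  qed
  have zs1: "zz \<otimes> s1 = s2 \<otimes> zz"
  proof -
    have "s2 \<otimes> zz = (s2 \<otimes> s1 \<otimes> s2) \<otimes> s1" unfolding zz_def using s1c s2c by (simp add: m_assoc)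
    also have "\<dots> = (s1 \<otimes> s2 \<otimes> s1) \<otimes> s1" using braid by simp
    finally show ?thesis unfolding zz_def by simp
  qed
  have zs2: "zz \<otimes> s2 = s1 \<otimes> zz"
  proof -
    have "zz \<otimes> s2 = s1 \<otimes> (s2 \<otimes> s1 \<otimes> s2)" unfolding zz_def using s1c s2c by (simp add: m_assoc)
    also have "\<dots> = s1 \<otimes> (s1 \<otimes> s2 \<otimes> s1)" using braid by simp
    finally show ?thesis unfolding zz_def by simp
  qed
  have s1_eq: "s1 = yy \<otimes> zz"
    using s1c zc by (simp add: yy_def m_assoc zz2)
  have s2_eq: "s2 = zz \<otimes> yy"
  proof -
    have "zz \<otimes> yy = zz \<otimes> s1 \<otimes> zz" using s1c zc by (simp add: yy_def m_assoc)
    also have "\<dots> = s2 \<otimes> (zz \<otimes> zz)" using s1c s2c zc by (simp add: zs1 m_assoc)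
    finally show ?thesis using s2c by (simp add: zz2)
  qed
  have y3: "yy \<otimes> (yy \<otimes> yy) = \<one>"
  proof -
    have "yy \<otimes> (yy \<otimes> yy) = s1 \<otimes> (zz \<otimes> s1) \<otimes> (zz \<otimes> s1) \<otimes> zz"
      using s1c zc by (simp add: yy_def m_assoc)
    also have "\<dots> = s1 \<otimes> s2 \<otimes> (zz \<otimes> s2) \<otimes> (zz \<otimes> zz)"
      using s1c s2c zc by (simp add: zs1 m_assoc)
    also have "\<dots> = s1 \<otimes> s2 \<otimes> s1 \<otimes> zz"
      using s1c s2c zc by (simp add: zs2 zz2 m_assoc)
    also have "\<dots> = \<one>" by (simp add: zz_def[symmetric] zz2)
    finally show ?thesis .
  qed
  interpret T: thm6 G yy zz
    using assms(2,3,4) yc zc zz2 y3 assms(7) s1_eq s2_eq by unfold_locales simp_all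
  show ?thesis using T.main unfolding s1_eq s2_eq .
qed

end
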